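(* Let $n\geq 2$. If $f:\mathbb{R}^n\rightarrow\mathbb{R}^n$ is quasiconformal and $\sup_{z\in S^{n-1}}\widetilde{H}_f(B(z,r))\rightarrow 0$ as $r\rightarrow 0$, then $f(S^{n-1})$ is Reifenberg flat with vanishing constant.
   Context: For $\Omega\subset\mathbb{R}^n$, $H_f(\Omega)=\sup\{|f(x)-f(y)|/|f(x)-f(z)|: x,y,z\in\Omega,\ |x-y|\leq|x-z|\}$ and $\widetilde{H}_f(\Omega)=H_f(\Omega)-1$. For a closed $\Sigma\subset\mathbb{R}^n$, $\theta_\Sigma(x,t)=\frac1t\min_{L}\mathrm{HD}[\Sigma\cap B(x,t),(x+L)\cap B(x,t)]$, minimum over $(n-1)$-dimensional linear subspaces $L$, $\mathrm{HD}$ the Hausdorff distance. $\Sigma$ is $(\delta,R)$-Reifenberg flat if $\theta_\Sigma(x,t)\leq\delta$ for all $x\in\Sigma$, $0<t\leq R$; it is Reifenberg flat with vanishing constant if for every $\delta>0$ there is $R_\delta>0$ such that $\Sigma$ is $(\delta,R_\delta)$-Reifenberg flat. *)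

theory Defs
  imports "HOL-Analysis.Analysis"
begin

text \<open>Three-point distortion H_f(Omega), as an extended real (it may be infinite).
  Triples with x = z are excluded (there the quotient is 0/0; for injective f
  such triples force y = x).\<close>
definition H_dist :: "('a::euclidean_space \<Rightarrow> 'a) \<Rightarrow> 'a set \<Rightarrow> ereal" where
  "H_dist f \<Omega> = (SUP (x,y,z) \<in> {(x,y,z). x \<in> \<Omega> \<and> y \<in> \<Omega> \<and> z \<in> \<Omega> \<and> x \<noteq> z \<and> dist x y \<le> dist x z}.
                     ereal (norm (f x - f y) / norm (f x - f z)))"

definition H_tilde :: "('a::euclidean_space \<Rightarrow> 'a) \<Rightarrow> 'a set \<Rightarrow> ereal" where
  "H_tilde f \<Omega> = H_dist f \<Omega> - 1"

definition L_max :: "('a::euclidean_space \<Rightarrow> 'a) \<Rightarrow> 'a \<Rightarrow> real \<Rightarrow> ereal" where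
  "L_max f x r = (SUP y \<in> sphere x r. ereal (dist (f y) (f x)))"

definition l_min :: "('a::euclidean_space \<Rightarrow> 'a) \<Rightarrow> 'a \<Rightarrow> real \<Rightarrow> ereal" where
  "l_min f x r = (INF y \<in> sphere x r. ereal (dist (f y) (f x)))"

definition quasiconformal :: "('a::euclidean_space \<Rightarrow> 'a) \<Rightarrow> bool" where
  "quasiconformal f \<longleftrightarrow> (\<exists>g. homeomorphism UNIV UNIV f g) \<and>
     (\<exists>H::real. \<forall>x. Limsup (at_right 0) (\<lambda>r. L_max f x r / l_min f x r) \<le> ereal H)"

definition hausdorff_dist :: "'a::metric_space set \<Rightarrow> 'a set \<Rightarrow> real" where
  "hausdorff_dist A B = max (SUP a\<in>A. infdist a B) (SUP b\<in>B. infdist b A)"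

text \<open>Reifenberg flatness.  Balls B(x,t) are taken closed; the minimum over
  hyperplanes is an infimum; HD is the library Hausdorff distance.\<close>
definition theta :: "'a::euclidean_space set \<Rightarrow> 'a \<Rightarrow> real \<Rightarrow> real" where
  "theta S x t = (INF L \<in> {L. subspace L \<and> dim L = DIM('a) - 1}.
      hausdorff_dist (S \<inter> cball x t) (((+) x ` L) \<inter> cball x t) / t)"

definition reifenberg_flat :: "real \<Rightarrow> real \<Rightarrow> 'a::euclidean_space set \<Rightarrow> bool" where
  "reifenberg_flat \<delta> R S \<longleftrightarrow> closed S \<and> (\<forall>x\<in>S. \<forall>t. 0 < t \<and> t \<le> R \<longrightarrow> theta S x t \<le> \<delta>)"

definition reifenberg_flat_vanishing :: "'a::euclidean_space set \<Rightarrow> bool" where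
  "reifenberg_flat_vanishing S \<longleftrightarrow> closed S \<and> (\<forall>\<delta>>0. \<exists>R>0. reifenberg_flat \<delta> R S)"

end

theory Submission
  imports Defs
begin
definition Hb :: "('a::euclidean_space \<Rightarrow> 'a) \<Rightarrow> 'a set \<Rightarrow> real \<Rightarrow> bool" where
  "Hb f C e \<longleftrightarrow> (\<forall>x\<in>C. \<forall>y\<in>C. \<forall>w\<in>C. x \<noteq> w \<and> dist x y \<le> dist x w \<longrightarrow>
      norm (f x - f y) \<le> (1+e) * norm (f x - f w))"

lemma Hb_D: "Hb f C e \<Longrightarrow> x\<in>C \<Longrightarrow> y\<in>C \<Longrightarrow> w\<in>C \<Longrightarrow> x \<noteq> w \<Longrightarrow> dist x y \<le> dist x w \<Longrightarrow>
      norm (f x - f y) \<le> (1+e) * norm (f x - f w)"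
  unfolding Hb_def by blast

lemma H_tilde_Hb:
  fixes f :: "'a::euclidean_space \<Rightarrow> 'a"
  assumes "H_tilde f \<Omega> \<le> ereal e" "inj f"
  shows "Hb f \<Omega> e"
  unfolding Hb_def
proof (intro ballI impI)
  fix x y w assume xyw: "x\<in>\<Omega>" "y\<in>\<Omega>" "w\<in>\<Omega>" and c: "x \<noteq> w \<and> dist x y \<le> dist x w"
  have "ereal (norm (f x - f y) / norm (f x - f w)) \<le> H_dist f \<Omega>"
    unfolding H_dist_def
    by (rule SUP_upper2[where i="(x,y,w)"]) (use xyw c in auto)
  moreover have "H_dist f \<Omega> \<le> ereal (e+1)"
  proof -
    have "H_dist f \<Omega> - 1 \<le> ereal e" using assms(1) unfolding H_tilde_def by simp
    thus ?thesis by (cases "H_dist f \<Omega>") (auto simp: one_ereal_def)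
  qed
  ultimately have "ereal (norm (f x - f y) / norm (f x - f w)) \<le> ereal (e+1)" by (rule order_trans)
  hence r: "norm (f x - f y) / norm (f x - f w) \<le> 1 + e" by simp
  have "f x \<noteq> f w" using assms(2) c by (auto dest: injD)
  hence "norm (f x - f w) > 0" by simp
  thus "norm (f x - f y) \<le> (1+e) * norm (f x - f w)" using r by (simp add: field_simps)
qed

lemma hyp_extract:
  fixes f :: "'a::euclidean_space \<Rightarrow> 'a"
  assumes "((\<lambda>r. SUP z \<in> sphere (0::'a) 1. H_tilde f (ball z r)) \<longlongrightarrow> 0) (at_right 0)"
    and "inj f" and "e > 0"
  shows "\<exists>r0>0. \<forall>r z. 0 < r \<and> r < r0 \<and> z \<in> sphere 0 1 \<longrightarrow> Hb f (ball z r) e"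
proof -
  have "eventually (\<lambda>r. (SUP z \<in> sphere (0::'a) 1. H_tilde f (ball z r)) < ereal e) (at_right 0)"
    using order_tendstoD(2)[OF assms(1)] assms(3) by simp
  then obtain r0 where r0: "r0 > 0" "\<And>r. 0 < r \<Longrightarrow> r < r0 \<Longrightarrow> (SUP z \<in> sphere (0::'a) 1. H_tilde f (ball z r)) < ereal e"
    unfolding eventually_at_right_field by blast
  show ?thesis
  proof (intro exI[of _ r0] conjI allI impI)
    fix r z assume h: "0 < r \<and> r < r0 \<and> z \<in> sphere (0::'a) 1"
    have "H_tilde f (ball z r) \<le> (SUP z \<in> sphere (0::'a) 1. H_tilde f (ball z r))"
      using h by (intro SUP_upper) auto
    also have "\<dots> \<le> ereal e" using r0(2) h by (simp add: less_imp_le)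
    finally show "Hb f (ball z r) e" using H_tilde_Hb assms(2) by blast
  qed (use r0 in auto)
qed


lemma hom_inj: "homeomorphism UNIV UNIV f g \<Longrightarrow> inj f"
  unfolding homeomorphism_def by (metis UNIV_I injI)

lemma hom_cont: "homeomorphism UNIV UNIV f g \<Longrightarrow> continuous_on S f"
  unfolding homeomorphism_def by (meson continuous_on_subset subset_UNIV)

lemma hom_surj: "homeomorphism UNIV UNIV f g \<Longrightarrow> f (g y) = y"
  unfolding homeomorphism_def by simp

lemma hom_open: "homeomorphism UNIV UNIV f g \<Longrightarrow> open U \<Longrightarrow> open (f ` U)"
  using homeomorphism_imp_open_map[of UNIV UNIV f g U] by simp

lemma cross:
  fixes f :: "'a::euclidean_space \<Rightarrow> 'a"
  assumes hom: "homeomorphism UNIV UNIV f g" and K: "connected K"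
    and k1: "K \<inter> f ` ball c r \<noteq> {}" and k2: "K - f ` cball c r \<noteq> {}"
  shows "K \<inter> f ` sphere c r \<noteq> {}"
proof
  assume none: "K \<inter> f ` sphere c r = {}"
  have inj: "inj f" using hom by (rule hom_inj)
  define U where "U = f ` ball c r"
  define V where "V = f ` (- cball c r)"
  have oU: "open U" unfolding U_def by (rule hom_open[OF hom]) simp
  have oV: "open V" unfolding V_def by (rule hom_open[OF hom]) (rule open_Compl, rule closed_cball)
  have UV: "U \<inter> V \<inter> K = {}"
  proof (rule ccontr)
    assume "U \<inter> V \<inter> K \<noteq> {}"
    then obtain y1 y2 where y: "y1 \<in> ball c r" "y2 \<in> - cball c r" "f y1 = f y2"
      unfolding U_def V_def by blast
    hence "y1 = y2" using inj by (simp add: inj_eq)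
    thus False using y by auto
  qed
  have cov: "K \<subseteq> U \<union> V"
  proof
    fix k assume kK: "k \<in> K"
    have fk: "f (g k) = k" using hom_surj[OF hom] .
    have ns: "g k \<notin> sphere c r"
    proof
      assume "g k \<in> sphere c r"
      hence "f (g k) \<in> f ` sphere c r" by (rule imageI)
      thus False using none kK fk by auto
    qed
    show "k \<in> U \<union> V"
    proof (cases "dist c (g k) < r")
      case True
      hence "f (g k) \<in> U" unfolding U_def by simp
      thus ?thesis using fk by simp
    next
      case False
      hence "dist c (g k) > r" using ns by auto
      hence "f (g k) \<in> V" unfolding V_def by simp
      thus ?thesis using fk by simp
    qed
  qed
  have "U \<inter> K \<noteq> {}" using k1 unfolding U_def by blast
  moreover have "V \<inter> K \<noteq> {}"
  proof -
    obtain k where k: "k \<in> K" "k \<notin> f ` cball c r" using k2 by blast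
    have fk: "f (g k) = k" using hom_surj[OF hom] .
    have "g k \<notin> cball c r"
    proof
      assume "g k \<in> cball c r"
      hence "f (g k) \<in> f ` cball c r" by (rule imageI)
      thus False using k fk by simp
    qed
    hence "f (g k) \<in> V" unfolding V_def by simp
    thus ?thesis using k fk by auto
  qed
  ultimately show False using connectedD[OF K oU oV UV cov] by blast
qed

lemma ball_in_image:
  fixes f :: "'a::euclidean_space \<Rightarrow> 'a"
  assumes hom: "homeomorphism UNIV UNIV f g" and r: "0 < r"
    and big: "\<And>w. w \<in> sphere c r \<Longrightarrow> t < dist (f w) (f c)"
  shows "cball (f c) t \<subseteq> f ` ball c r"
proof
  fix q assume q: "q \<in> cball (f c) t"
  show "q \<in> f ` ball c r"
  proof (rule ccontr)
    assume nq: "q \<notin> f ` ball c r"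
    have t0: "0 \<le> t" using q by (meson dist_not_less_zero mem_cball order_trans not_le)
    have "q \<notin> f ` sphere c r"
    proof
      assume "q \<in> f ` sphere c r"
      then obtain w where "w \<in> sphere c r" "q = f w" by blast
      thus False using big[of w] q by (simp add: dist_commute)
    qed
    have "q \<notin> f ` cball c r"
    proof
      assume "q \<in> f ` cball c r"
      then obtain y where y: "y \<in> cball c r" "q = f y" by blast
      show False
      proof (cases "dist c y < r")
        case True hence "y \<in> ball c r" by simp
        thus False using nq y by blast
      next
        case False hence "y \<in> sphere c r" using y by simp
        thus False using \<open>q \<notin> f ` sphere c r\<close> y by blast
      qed
    qed
    hence "cball (f c) t - f ` cball c r \<noteq> {}" using q by blast
    moreover have "f c \<in> cball (f c) t" "f c \<in> f ` ball c r" using t0 r by auto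
    hence "cball (f c) t \<inter> f ` ball c r \<noteq> {}" by blast
    ultimately have "cball (f c) t \<inter> f ` sphere c r \<noteq> {}"
      by (intro cross[OF hom]) auto
    then obtain q' where q': "q' \<in> cball (f c) t" "q' \<in> f ` sphere c r" by blast
    then obtain w where "w \<in> sphere c r" "q' = f w" by blast
    thus False using big[of w] q' by (simp add: dist_commute)
  qed
qed

lemma ray:
  fixes f :: "'a::euclidean_space \<Rightarrow> 'a"
  assumes hom: "homeomorphism UNIV UNIV f g" and r: "0 < r" and ne: "f u \<noteq> f p"
  shows "\<exists>w \<in> sphere p r. norm (f u - f w) = norm (f u - f p) + norm (f p - f w)"
proof -
  define d where "d = f p - f u"
  have d0: "norm d > 0" using ne unfolding d_def by simp
  define K where "K = (\<lambda>l. f p + l *\<^sub>R d) ` {0..}"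
  have cK: "connected K" unfolding K_def
    by (intro connected_continuous_image continuous_intros) (simp add: is_interval_connected)
  have "f p \<in> K \<inter> f ` ball p r" unfolding K_def using r by force
  hence k1: "K \<inter> f ` ball p r \<noteq> {}" by blast
  have "compact (f ` cball p r)" by (intro compact_continuous_image hom_cont[OF hom]) simp
  then obtain B where B: "\<And>y. y \<in> f ` cball p r \<Longrightarrow> norm y \<le> B"
    using compact_imp_bounded bounded_iff by metis
  define l where "l = (\<bar>B\<bar> + norm (f p) + 1) / norm d"
  have l0: "l \<ge> 0" unfolding l_def using d0 by simp
  have "norm (l *\<^sub>R d) = \<bar>B\<bar> + norm (f p) + 1" unfolding l_def using d0 by simp
  hence "norm (f p + l *\<^sub>R d) \<ge> \<bar>B\<bar> + 1"
    using norm_triangle_ineq2[of "l *\<^sub>R d" "- f p"] by (simp add: add.commute)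
  hence "f p + l *\<^sub>R d \<notin> f ` cball p r" using B by force
  moreover have "f p + l *\<^sub>R d \<in> K" unfolding K_def using l0 by auto
  ultimately have k2: "K - f ` cball p r \<noteq> {}" by blast
  obtain w where w: "w \<in> sphere p r" "f w \<in> K" using cross[OF hom cK k1 k2] by blast
  then obtain l' where l': "l' \<ge> 0" "f w = f p + l' *\<^sub>R d" unfolding K_def by auto
  have "f u - f w = - ((1 + l') *\<^sub>R d)" using l' unfolding d_def by (simp add: algebra_simps)
  hence "norm (f u - f w) = (1 + l') * norm d" using l' by simp
  moreover have "norm (f p - f w) = l' * norm d" using l' by simp
  moreover have "norm (f u - f p) = norm d" unfolding d_def by (simp add: norm_minus_commute)
  ultimately show ?thesis using w by (intro bexI[of _ w]) (auto simp: algebra_simps)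
qed

lemma arith_growth:
  fixes e A N W :: real
  assumes "0 \<le> e" "e \<le> 1/10" "0 \<le> A"
    and "A + A / (1+e) \<le> (1+e) * N" and "W \<le> (1+e) * A"
  shows "W \<le> 2/3 * N"
proof -
  have "A * (2+e) \<le> (1+e)^2 * N"
  proof -
    have "A + A/(1+e) = A * (2+e)/(1+e)" using assms(1) by (simp add: field_simps)
    hence "A * (2+e) / (1+e) \<le> (1+e) * N" using assms(4) by simp
    thus ?thesis using assms(1) by (simp add: field_simps power2_eq_square)
  qed
  hence "(1+e) * A * (2+e) \<le> (1+e)^3 * N" using assms(1)
    by (metis (no_types, opaque_lifting) ab_semigroup_mult_class.mult_ac(1) add_nonneg_nonneg
        mult_left_mono power3_eq_cube power2_eq_square zero_le_one)
  moreover have "(1+e)^3 \<le> 2/3 * (2+e)" using assms(1,2)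
  proof -
    have "(1+e)^3 = 1 + 3*e + 3*e^2 + e^3" by (simp add: power3_eq_cube power2_eq_square algebra_simps)
    moreover have "e^2 \<le> e/10"
    proof -
      have "e*(e*10) \<le> e*1" using assms(1,2) by (intro mult_left_mono) auto
      thus ?thesis by (simp add: power2_eq_square)
    qed
    moreover have "e^3 \<le> e/100"
    proof -
      have "e * e^2 \<le> e * (e/10)" using \<open>e^2 \<le> e/10\<close> assms(1) by (rule mult_left_mono)
      hence "e^3 \<le> e^2/10" by (simp add: power2_eq_square power3_eq_cube)
      thus ?thesis using \<open>e^2 \<le> e/10\<close> by linarith
    qed
    ultimately have "(1+e)^3 \<le> 1 + 3*e + 3*(e/10) + e/100" by linarith
    also have "\<dots> \<le> 2/3 * (2+e)" using assms(1,2) by (simp add: algebra_simps)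
    finally show ?thesis .
  qed
  moreover have N0: "0 \<le> N"
  proof -
    have "0 \<le> A + A / (1+e)" using assms(1,3) by simp
    hence "0 \<le> (1+e) * N" using assms(4) by linarith
    thus ?thesis using assms(1) by (simp add: zero_le_mult_iff)
  qed
  ultimately have "(1+e) * A * (2+e) \<le> 2/3 * (2+e) * N"
    using mult_right_mono[of "(1+e)^3" "2/3 * (2+e)" N] by linarith
  hence "((1+e) * A) * (2+e) \<le> (2/3 * N) * (2+e)" by (simp add: mult_ac)
  hence "(1+e) * A \<le> 2/3 * N" using assms(1) mult_le_cancel_right_pos[of "2+e"] by simp
  thus ?thesis using assms(5) by linarith
qed

lemma growth1:
  fixes f :: "'a::euclidean_space \<Rightarrow> 'a"
  assumes hom: "homeomorphism UNIV UNIV f g" and H: "Hb f C e" and e: "0 \<le> e" "e \<le> 1/10"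
    and C: "cball a (dist a v) \<subseteq> C" and av: "a \<noteq> v" and w: "dist a w \<le> dist a v / 2"
  shows "norm (f a - f w) \<le> 2/3 * norm (f a - f v)"
proof -
  have inj: "inj f" using hom by (rule hom_inj)
  define r where "r = dist a v / 2"
  define p where "p = a + (1/2) *\<^sub>R (v - a)"
  have r0: "r > 0" using av unfolding r_def by simp
  have pa: "dist p a = r" unfolding p_def r_def dist_norm by (simp add: norm_minus_commute)
  have ap: "dist a p = r" using pa by (simp add: dist_commute)
  have "a \<noteq> p" using ap r0 by auto
  hence fap: "f a \<noteq> f p" using inj by (auto dest: injD)
  obtain w' where w': "w' \<in> sphere p r"
     and eq: "norm (f a - f w') = norm (f a - f p) + norm (f p - f w')"
    using ray[OF hom r0 fap] by blast
  have dpw: "dist p w' = r" using w' by simp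
  have daw: "dist a w' \<le> dist a v" using dist_triangle[of a w' p] ap dpw unfolding r_def by linarith
  have "dist a p \<le> dist a v" using ap r0 unfolding r_def by linarith
  have "dist a w \<le> dist a v" using w r0 unfolding r_def by linarith
  note this \<open>dist a p \<le> dist a v\<close>
  hence inC: "a \<in> C" "v \<in> C" "p \<in> C" "w' \<in> C" "w \<in> C"
    using C daw by (auto simp: subset_iff)
  have h1: "norm (f a - f w') \<le> (1+e) * norm (f a - f v)"
    by (rule Hb_D[OF H]) (use inC av daw in auto)
  have "p \<noteq> w'" using dpw r0 by auto
  have h2: "norm (f p - f a) \<le> (1+e) * norm (f p - f w')"
    by (rule Hb_D[OF H]) (use inC \<open>p \<noteq> w'\<close> pa dpw in auto)
  have h3: "norm (f a - f w) \<le> (1+e) * norm (f a - f p)"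
    by (rule Hb_D[OF H]) (use inC \<open>a \<noteq> p\<close> ap w in \<open>auto simp: r_def\<close>)
  have "norm (f a - f p) / (1+e) \<le> norm (f p - f w')"
    using h2 e by (simp add: field_simps norm_minus_commute)
  hence "norm (f a - f p) + norm (f a - f p) / (1+e) \<le> (1+e) * norm (f a - f v)"
    using eq h1 by linarith
  thus ?thesis using arith_growth[OF e norm_ge_zero _ h3] by blast
qed

lemma growthk:
  fixes f :: "'a::euclidean_space \<Rightarrow> 'a"
  assumes hom: "homeomorphism UNIV UNIV f g" and H: "Hb f C e" and e: "0 \<le> e" "e \<le> 1/10"
  shows "cball a (dist a v) \<subseteq> C \<Longrightarrow> a \<noteq> v \<Longrightarrow> dist a w \<le> dist a v / 2^k \<Longrightarrow>
     norm (f a - f w) \<le> (1+e) * (2/3)^k * norm (f a - f v)"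
proof (induction k arbitrary: v)
  case 0
  have "a \<in> C" "v \<in> C" "w \<in> C" using 0 by (auto simp: subset_iff)
  thus ?case using Hb_D[OF H, of a w v] 0 by auto
next
  case (Suc k)
  define v1 where "v1 = a + (1/2) *\<^sub>R (v - a)"
  have d1: "dist a v1 = dist a v / 2" unfolding v1_def dist_norm by (simp add: norm_minus_commute)
  have "a \<noteq> v1" using d1 Suc.prems(2) by auto
  have "dist a v1 \<le> dist a v" using d1 zero_le_dist[of a v] by linarith
  hence C1: "cball a (dist a v1) \<subseteq> C" using Suc.prems(1) by (auto simp: subset_iff)
  have "dist a w \<le> dist a v1 / 2^k" using Suc.prems(3) d1 by (simp add: field_simps)
  hence i: "norm (f a - f w) \<le> (1+e) * (2/3)^k * norm (f a - f v1)"
    using Suc.IH[OF C1 \<open>a \<noteq> v1\<close>] by blast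
  have g: "norm (f a - f v1) \<le> 2/3 * norm (f a - f v)"
    by (rule growth1[OF hom H e Suc.prems(1,2)]) (simp add: d1)
  have "(1+e) * (2/3)^k * norm (f a - f v1) \<le> (1+e) * (2/3)^k * (2/3 * norm (f a - f v))"
    using g e by (intro mult_left_mono) auto
  thus ?case using i by (simp add: mult_ac)
qed


lemma k_bound:
  fixes e :: real assumes "0 \<le> e" "e \<le> 1/10"
  shows "(2+e)*(1+e)^2 \<le> 4" "(1+e)^2 \<le> 3/2"
proof -
  have "(1+e)^2 \<le> (11/10)^2" by (rule power_mono) (use assms in auto)
  hence a: "(1+e)^2 \<le> 121/100" by (simp add: power2_eq_square)
  have "(2+e)*(1+e)^2 \<le> (21/10)*(121/100)" by (rule mult_mono) (use assms a in auto)
  thus "(2+e)*(1+e)^2 \<le> 4" by simp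
  show "(1+e)^2 \<le> 3/2" using a by simp
qed

lemma arithI:
  fixes e P Q D :: real
  assumes e: "0 \<le> e" "e \<le> 1/10" and "0 \<le> P" "0 \<le> Q" "Q \<le> (1+e)*P" "P \<le> (1+e)*D"
  shows "Q^2 - P^2 \<le> 4*e*D^2"
proof -
  have q2: "Q^2 \<le> ((1+e)*P)^2" by (rule power_mono) (use assms in auto)
  have p2: "P^2 \<le> ((1+e)*D)^2" by (rule power_mono) (use assms in auto)
  have "((1+e)*P)^2 - P^2 = (e*(2+e)) * P^2" by (simp add: power2_eq_square algebra_simps)
  also have "\<dots> \<le> (e*(2+e)) * ((1+e)*D)^2" using p2 e by (intro mult_left_mono) auto
  also have "\<dots> = (e*((2+e)*(1+e)^2)) * D^2" by (simp add: power_mult_distrib)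
  also have "\<dots> \<le> (e*4) * D^2" using k_bound[OF e] e by (intro mult_right_mono mult_left_mono) auto
  finally show ?thesis using q2 by simp
qed

lemma arithII:
  fixes e p P Q D :: real
  assumes e: "0 \<le> e" "e \<le> 1/10" and p: "0 \<le> p" "p \<le> 1"
    and "0 \<le> P" "0 \<le> Q" "0 \<le> D" and PQ: "P \<le> (1+e)*Q + p*D" and QD: "Q \<le> (1+e)*D"
  shows "P^2 - Q^2 \<le> (4*e + 4*p)*D^2"
proof -
  have P2: "P^2 \<le> ((1+e)*Q + p*D)^2" by (rule power_mono) (use assms in auto)
  have A: "((1+e)*Q + p*D)^2 = (1+e)^2*Q^2 + 2*(1+e)*p*(Q*D) + p^2*D^2"
    by (simp add: power2_eq_square algebra_simps)
  have Q2: "Q^2 \<le> ((1+e)*D)^2" by (rule power_mono) (use assms in auto)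
  have "(1+e)^2*Q^2 - Q^2 = (e*(2+e)) * Q^2" by (simp add: power2_eq_square algebra_simps)
  also have "\<dots> \<le> (e*(2+e)) * ((1+e)*D)^2" using Q2 e by (intro mult_left_mono) auto
  also have "\<dots> = (e*((2+e)*(1+e)^2)) * D^2" by (simp add: power_mult_distrib)
  also have "\<dots> \<le> (e*4) * D^2" using k_bound[OF e] e by (intro mult_right_mono mult_left_mono) auto
  finally have B1: "(1+e)^2*Q^2 - Q^2 \<le> 4*e*D^2" by simp
  have "Q*D \<le> ((1+e)*D)*D" using QD assms by (intro mult_right_mono) auto
  hence "2*(1+e)*p*(Q*D) \<le> 2*(1+e)*p*(((1+e)*D)*D)" using assms by (intro mult_left_mono) auto
  also have "\<dots> = (2*(1+e)^2) * (p*D^2)" by (simp add: power2_eq_square algebra_simps)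
  also have "\<dots> \<le> 3 * (p*D^2)" using k_bound(2)[OF e] assms by (intro mult_right_mono) auto
  finally have B2: "2*(1+e)*p*(Q*D) \<le> 3*p*D^2" by simp
  have "p*p \<le> p*1" using p by (intro mult_left_mono) auto
  hence "p^2*D^2 \<le> p*D^2" by (intro mult_right_mono) (auto simp: power2_eq_square)
  thus ?thesis using P2 A B1 B2 by (simp add: algebra_simps)
qed

lemma nsq:
  fixes y z0 :: "'a::euclidean_space"
  assumes "norm z0 = 1"
  shows "(norm (y - c *\<^sub>R z0))^2 = y \<bullet> y - 2*c*(y \<bullet> z0) + c^2"
proof -
  have z: "z0 \<bullet> z0 = 1" using assms by (metis norm_eq_1)
  have "(norm (y - c *\<^sub>R z0))^2 = (y - c *\<^sub>R z0) \<bullet> (y - c *\<^sub>R z0)"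
    by (simp add: power2_norm_eq_inner)
  also have "\<dots> = y \<bullet> y - 2*c*(y \<bullet> z0) + c^2*(z0 \<bullet> z0)"
    by (simp add: inner_diff_left inner_diff_right inner_commute algebra_simps power2_eq_square)
  finally show ?thesis using z by simp
qed

lemma sqdiff:
  fixes q A B :: "'a::euclidean_space"
  shows "(norm (q - A))^2 - (norm (q - B))^2 = -2 * ((q - (1/2) *\<^sub>R (A+B)) \<bullet> (A - B))"
  unfolding power2_norm_eq_inner
  by (simp add: inner_diff_left inner_diff_right inner_add_left
      inner_add_right inner_commute algebra_simps)

lemma hd_nonneg:
  fixes A B :: "'a::metric_space set"
  assumes "x \<in> A" "x \<in> B" "A \<subseteq> cball x t"
  shows "0 \<le> hausdorff_dist A B"
proof -
  have "bdd_above ((\<lambda>a. infdist a B) ` A)"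
  proof (rule bdd_aboveI2)
    fix a assume "a \<in> A"
    have "infdist a B \<le> dist a x" using assms(2) by (rule infdist_le)
    also have "\<dots> \<le> t" using assms(3) \<open>a \<in> A\<close> by (auto simp: dist_commute)
    finally show "infdist a B \<le> t" .
  qed
  hence "infdist x B \<le> (SUP a\<in>A. infdist a B)" using assms(1) by (intro cSUP_upper)
  hence "0 \<le> (SUP a\<in>A. infdist a B)" using infdist_nonneg[of x B] by linarith
  thus ?thesis unfolding hausdorff_dist_def by linarith
qed

lemma theta_le:
  fixes S :: "'a::euclidean_space set"
  assumes u: "u \<noteq> 0" and x: "x \<in> S" and t: "0 < t"
    and A1: "\<And>q. q \<in> S \<inter> cball x t \<Longrightarrow> \<exists>p \<in> (+) x ` {v. u \<bullet> v = 0} \<inter> cball x t. dist q p \<le> c"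
    and A2: "\<And>p. p \<in> (+) x ` {v. u \<bullet> v = 0} \<inter> cball x t \<Longrightarrow> \<exists>q \<in> S \<inter> cball x t. dist p q \<le> c"
  shows "theta S x t \<le> c / t"
proof -
  let ?L = "{v. u \<bullet> v = 0}"
  let ?LL = "{L. subspace L \<and> dim L = DIM('a) - 1}"
  have Lin: "?L \<in> ?LL" using subspace_hyperplane dim_hyperplane[OF u] by auto
  define A where "A = S \<inter> cball x t"
  define B where "B = (+) x ` ?L \<inter> cball x t"
  have xA: "x \<in> A" unfolding A_def using x t by auto
  have "x + 0 \<in> (+) x ` ?L" by (intro imageI) simp
  hence xB: "x \<in> B" unfolding B_def using t by auto
  have s1: "(SUP a\<in>A. infdist a B) \<le> c"
  proof (rule cSUP_least)
    show "A \<noteq> {}" using xA by blast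
    fix q assume "q \<in> A"
    then obtain p where "p \<in> B" "dist q p \<le> c" using A1 unfolding A_def B_def by blast
    thus "infdist q B \<le> c" using infdist_le[of p B q] by linarith
  qed
  have s2: "(SUP b\<in>B. infdist b A) \<le> c"
  proof (rule cSUP_least)
    show "B \<noteq> {}" using xB by blast
    fix p assume "p \<in> B"
    then obtain q where "q \<in> A" "dist p q \<le> c" using A2 unfolding A_def B_def by blast
    thus "infdist p A \<le> c" using infdist_le[of q A p] by linarith
  qed
  have hd: "hausdorff_dist A B \<le> c" unfolding hausdorff_dist_def using s1 s2 by simp
  have bdd: "bdd_below ((\<lambda>L. hausdorff_dist (S \<inter> cball x t) ((+) x ` L \<inter> cball x t) / t) ` ?LL)"
  proof (rule bdd_belowI2)
    fix L :: "'a set" assume "L \<in> ?LL"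
    hence "0 \<in> L" by (simp add: subspace_0)
    hence "x + 0 \<in> (+) x ` L" by (intro imageI)
    hence "x \<in> (+) x ` L \<inter> cball x t" using t by auto
    hence "0 \<le> hausdorff_dist (S \<inter> cball x t) ((+) x ` L \<inter> cball x t)"
      using x t by (intro hd_nonneg[of x _ _ t]) auto
    thus "0 \<le> hausdorff_dist (S \<inter> cball x t) ((+) x ` L \<inter> cball x t) / t" using t by simp
  qed
  have "theta S x t \<le> hausdorff_dist A B / t"
    unfolding theta_def A_def B_def by (rule cINF_lower[OF bdd Lin])
  also have "\<dots> \<le> c / t" using hd t by (intro divide_right_mono) auto
  finally show ?thesis .
qed


lemma pyth:
  fixes w u :: "'a::euclidean_space"
  shows "(norm (w - c *\<^sub>R u))^2 = (norm w)^2 - 2*c*(w \<bullet> u) + c^2*(u \<bullet> u)"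
  unfolding power2_norm_eq_inner
  by (simp add: inner_diff_left inner_diff_right inner_commute algebra_simps power2_eq_square)

lemma lin1:
  fixes Na Nb Y c \<rho> :: real
  assumes "Nb = Y - 2*(1-\<rho>)*c + (1-\<rho>)^2" "Na = Y - 2*(1+\<rho>)*c + (1+\<rho>)^2" "c \<le> 1" "0 \<le> \<rho>"
  shows "Nb \<le> Na"
proof -
  have "Na - Nb = 4*\<rho>*(1-c)" using assms(1,2) by (simp add: power2_eq_square algebra_simps)
  moreover have "0 \<le> 4*\<rho>*(1-c)" using assms(3,4) by simp
  ultimately show ?thesis by linarith
qed

lemma local_flat:
  fixes f :: "'a::euclidean_space \<Rightarrow> 'a"
  assumes hom: "homeomorphism UNIV UNIV f g"
    and z0: "norm z0 = 1" and rho: "0 < \<rho>" "\<rho> \<le> 1/2" "\<rho> * 2^k \<le> 2"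
    and H: "Hb f (ball z0 (4*\<rho>)) e" and e: "0 < e" "e \<le> 1/10"
    and ph: "(1+e)*(2/3)^k \<le> \<phi>" "\<phi> \<le> 1"
    and h: "h = 2*e + 2*\<phi>" "15*h \<le> 1"
    and t: "2*t = norm (f ((1+\<rho>) *\<^sub>R z0) - f z0)"
  shows "theta (f ` sphere 0 1) (f z0) t \<le> 30*h"
proof -
  have inj: "inj f" by (rule hom_inj[OF hom])
  have e0: "0 \<le> e" using e by simp
  have phi0: "0 \<le> \<phi>" using ph(1) e by (smt (verit) zero_le_divide_iff zero_le_power mult_nonneg_nonneg)
  define C where "C = ball z0 (4*\<rho>)"
  define a where "a = (1+\<rho>) *\<^sub>R z0"
  define b where "b = (1-\<rho>) *\<^sub>R z0"
  define a' where "a' = (1+\<rho>-\<rho>^2) *\<^sub>R z0"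
  define x where "x = f z0"
  define u where "u = f a - f b"
  define D where "D = norm u"
  define m where "m = (1/2) *\<^sub>R (f a + f b)"
  define G where "G = (\<lambda>q. (q - m) \<bullet> u)"
  have HC: "Hb f C e" using H unfolding C_def .
  have dz: "dist z0 (c *\<^sub>R z0) = \<bar>1 - c\<bar>" for c
  proof -
    have "z0 - c *\<^sub>R z0 = (1 - c) *\<^sub>R z0" by (simp add: algebra_simps)
    thus ?thesis using z0 by (simp add: dist_norm)
  qed
  have dza: "dist z0 a = \<rho>" "dist a z0 = \<rho>" using dz[of "1+\<rho>"] rho unfolding a_def by (auto simp: dist_commute)
  have dzb: "dist z0 b = \<rho>" "dist b z0 = \<rho>" using dz[of "1-\<rho>"] rho unfolding b_def by (auto simp: dist_commute)
  have "\<rho>^2 \<le> \<rho>" using rho by (simp add: power2_eq_square mult_left_le_one_le)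
  hence dza': "dist z0 a' \<le> \<rho>" using dz[of "1+\<rho>-\<rho>^2"] rho unfolding a'_def by auto
  have dab: "dist a b = 2*\<rho>"
  proof -
    have "a - b = ((1+\<rho>) - (1-\<rho>)) *\<^sub>R z0" unfolding a_def b_def by (rule scaleR_diff_left[symmetric])
    also have "\<dots> = (2*\<rho>) *\<^sub>R z0" by simp
    finally have "a - b = (2*\<rho>) *\<^sub>R z0" .
    thus ?thesis using z0 rho by (simp add: dist_norm)
  qed
  have daa': "dist a a' = \<rho>^2"
  proof -
    have "a - a' = (\<rho>^2) *\<^sub>R z0" unfolding a_def a'_def by (simp add: algebra_simps)
    thus ?thesis using z0 by (simp add: dist_norm)
  qed
  have inC: "z0 \<in> C" "a \<in> C" "b \<in> C" "a' \<in> C" using rho dza dzb dza' unfolding C_def by auto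
  have yC: "y \<in> C" if "dist z0 y < \<rho>" for y using that rho unfolding C_def by auto
  have "a \<noteq> b" using dab rho by auto
  hence "f a \<noteq> f b" using inj by (simp add: inj_eq)
  hence D0: "D > 0" unfolding D_def u_def by simp
  have "a \<noteq> z0" using dza rho by auto
  hence "f a \<noteq> x" unfolding x_def using inj by (simp add: inj_eq)
  hence "norm (f a - x) > 0" by simp
  hence t0: "t > 0" using t unfolding a_def x_def by linarith
  have Pa: "norm (f y - f a) \<le> (1+e)*D" if "dist z0 y < \<rho>" for y
  proof -
    have "dist a y \<le> dist a z0 + dist z0 y" by (rule dist_triangle)
    hence "dist a y \<le> dist a b" using that dza dab by linarith
    hence "norm (f a - f y) \<le> (1+e) * norm (f a - f b)"
      by (intro Hb_D[OF HC]) (use inC yC[OF that] \<open>a \<noteq> b\<close> in auto)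
    thus ?thesis unfolding D_def u_def by (simp add: norm_minus_commute)
  qed
  have Pb: "norm (f y - f b) \<le> (1+e)*D" if "dist z0 y < \<rho>" for y
  proof -
    have "dist b y \<le> dist b z0 + dist z0 y" by (rule dist_triangle)
    hence "dist b y \<le> dist b a" using that dzb dab by (simp add: dist_commute)
    hence "norm (f b - f y) \<le> (1+e) * norm (f b - f a)"
      by (intro Hb_D[OF HC]) (use inC yC[OF that] \<open>a \<noteq> b\<close> in auto)
    thus ?thesis unfolding D_def u_def by (simp add: norm_minus_commute)
  qed
  have gr: "norm (f a - f a') \<le> \<phi> * D"
  proof -
    have sub: "cball a (dist a b) \<subseteq> C"
    proof
      fix p assume "p \<in> cball a (dist a b)"
      hence "dist a p \<le> 2*\<rho>" using dab by simp
      hence "dist z0 p < 4*\<rho>" using dist_triangle[of z0 p a] dza rho by linarith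
      thus "p \<in> C" unfolding C_def by simp
    qed
    have "\<rho>^2 * 2^k \<le> 2*\<rho>" using rho by (simp add: power2_eq_square mult.assoc mult_left_mono[of _ 2 \<rho>])
    hence "dist a a' \<le> dist a b / 2^k" using daa' dab by (simp add: field_simps)
    hence "norm (f a - f a') \<le> (1+e) * (2/3)^k * norm (f a - f b)"
      by (rule growthk[OF hom HC e0 e(2) sub \<open>a \<noteq> b\<close>])
    also have "\<dots> \<le> \<phi> * D" unfolding D_def u_def using ph(1) by (intro mult_right_mono) auto
    finally show ?thesis .
  qed
  have Geq: "G q = ((norm (q - f b))^2 - (norm (q - f a))^2) / 2" for q
    using sqdiff[of q "f a" "f b"] unfolding G_def m_def u_def by simp
  have claimI: "G (f y) \<le> 2*e*D^2" if y: "dist z0 y < \<rho>" "norm y \<le> 1" for y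
  proof -
    have c1: "y \<bullet> z0 \<le> 1" using norm_cauchy_schwarz[of y z0] y z0 by simp
    have eb: "(norm (y - b))^2 = y \<bullet> y - 2*(1-\<rho>)*(y \<bullet> z0) + (1-\<rho>)^2"
      unfolding b_def by (rule nsq[OF z0])
    have ea: "(norm (y - a))^2 = y \<bullet> y - 2*(1+\<rho>)*(y \<bullet> z0) + (1+\<rho>)^2"
      unfolding a_def by (rule nsq[OF z0])
    have "(norm (y - b))^2 \<le> (norm (y - a))^2"
      using lin1[OF eb ea c1] rho by linarith
    hence "dist y b \<le> dist y a" unfolding dist_norm by (rule power2_le_imp_le) simp
    moreover have "y \<noteq> a" using y dza by auto
    ultimately have Q: "norm (f y - f b) \<le> (1+e) * norm (f y - f a)"
      by (intro Hb_D[OF HC]) (use inC yC[OF y(1)] in auto)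
    have "(norm (f y - f b))^2 - (norm (f y - f a))^2 \<le> 4*e*D^2"
      by (rule arithI[OF e0 e(2) norm_ge_zero norm_ge_zero Q Pa[OF y(1)]])
    hence "((norm (f y - f b))^2 - (norm (f y - f a))^2) / 2 \<le> (4*e*D^2) / 2"
      by (rule divide_right_mono) simp
    thus ?thesis using Geq[of "f y"] by simp
  qed
  have claimII: "G (f y) \<ge> -(h*D^2)" if y: "dist z0 y < \<rho>" "norm y \<ge> 1" for y
  proof -
    have yz: "(norm (y - z0))^2 < \<rho>^2" using y rho by (simp add: dist_norm norm_minus_commute power_strict_mono)
    have yy: "1 \<le> y \<bullet> y" using y by (metis norm_ge_zero one_le_power power2_norm_eq_inner)
    have "(norm (y - 1 *\<^sub>R z0))^2 = y \<bullet> y - 2*(y \<bullet> z0) + 1" using nsq[OF z0, of y 1] by simp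
    hence c2: "2*(y \<bullet> z0) \<ge> 2 - \<rho>^2" using yz yy by simp
    have "(norm (y - a'))^2 - (norm (y - b))^2 = (2*\<rho> - \<rho>^2) * (2 - \<rho>^2 - 2*(y \<bullet> z0))"
      using nsq[OF z0, of y "1+\<rho>-\<rho>^2"] nsq[OF z0, of y "1-\<rho>"] unfolding a'_def b_def
      by (simp add: power2_eq_square algebra_simps)
    moreover have "(2*\<rho> - \<rho>^2) * (2 - \<rho>^2 - 2*(y \<bullet> z0)) \<le> 0"
      using c2 \<open>\<rho>^2 \<le> \<rho>\<close> rho by (intro mult_nonneg_nonpos) auto
    ultimately have "(norm (y - a'))^2 \<le> (norm (y - b))^2" by linarith
    hence "dist y a' \<le> dist y b" unfolding dist_norm by (rule power2_le_imp_le) simp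
    moreover have "y \<noteq> b" using y dzb by auto
    ultimately have Q: "norm (f y - f a') \<le> (1+e) * norm (f y - f b)"
      by (intro Hb_D[OF HC]) (use inC yC[OF y(1)] in auto)
    have "norm (f y - f a) \<le> norm (f y - f a') + norm (f a' - f a)"
      by (rule norm_diff_triangle_le[of _ "f a'"]) simp_all
    hence P: "norm (f y - f a) \<le> (1+e) * norm (f y - f b) + \<phi> * D"
      using Q gr by (simp add: norm_minus_commute)
    have "(norm (f y - f a))^2 - (norm (f y - f b))^2 \<le> (4*e + 4*\<phi>)*D^2"
      by (rule arithII[OF e0 e(2) phi0 ph(2) norm_ge_zero norm_ge_zero _ P Pb[OF y(1)]]) (use D0 in simp)
    hence w: "-((4*e + 4*\<phi>)*D^2) \<le> (norm (f y - f b))^2 - (norm (f y - f a))^2" by linarith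
    have g2: "2 * G (f y) = (norm (f y - f b))^2 - (norm (f y - f a))^2" using Geq[of "f y"] by simp
    have hh: "(4*e + 4*\<phi>)*D^2 = 2*(h*D^2)" using h(1) by (simp add: algebra_simps)
    have "-(2*(h*D^2)) \<le> 2 * G (f y)" using w unfolding g2[symmetric] hh .
    thus ?thesis by linarith
  qed
  have z0S: "dist z0 z0 < \<rho>" "norm z0 \<le> 1" "norm z0 \<ge> 1" using rho z0 by auto
  have Gx: "G x \<le> h*D^2" "G x \<ge> -(h*D^2)"
  proof -
    have "2*e*D^2 \<le> h*D^2" using h phi0 by (intro mult_right_mono) auto
    thus "G x \<le> h*D^2" using claimI[OF z0S(1,2)] unfolding x_def by linarith
    show "G x \<ge> -(h*D^2)" using claimII[OF z0S(1,3)] unfolding x_def .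
  qed
  have big: "t < dist (f w) (f z0)" if "w \<in> sphere z0 \<rho>" for w
  proof -
    have "dist z0 a \<le> dist z0 w" "z0 \<noteq> w" using that dza rho by auto
    moreover have "w \<in> C" using that rho unfolding C_def by auto
    ultimately have "norm (f z0 - f a) \<le> (1+e) * norm (f z0 - f w)"
      by (intro Hb_D[OF HC]) (use inC in auto)
    hence "2*t \<le> (1+e) * dist (f w) (f z0)" using t unfolding a_def by (simp add: dist_norm norm_minus_commute)
    moreover have "(1+e) * dist (f w) (f z0) < 2 * dist (f w) (f z0) \<or> dist (f w) (f z0) = 0"
      using e by auto
    ultimately show ?thesis using t0 by auto
  qed
  have cb: "cball x t \<subseteq> f ` ball z0 \<rho>" unfolding x_def by (rule ball_in_image[OF hom rho(1) big])
  have cbS: "\<exists>y. dist z0 y < \<rho> \<and> q = f y" if "q \<in> cball x t" for q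
  proof -
    have "q \<in> f ` ball z0 \<rho>" using cb that by blast
    thus ?thesis by auto
  qed
  have Dt: "D \<le> 5*t"
  proof -
    have "dist z0 b \<le> dist z0 a" "z0 \<noteq> a" using dza dzb \<open>a \<noteq> z0\<close> by auto
    hence "norm (f z0 - f b) \<le> (1+e) * norm (f z0 - f a)"
      by (intro Hb_D[OF HC]) (use inC in auto)
    moreover have "D \<le> norm (f a - f z0) + norm (f z0 - f b)"
      unfolding D_def u_def by (rule norm_diff_triangle_le[of _ "f z0"]) simp_all
    moreover have "norm (f a - f z0) = 2*t" using t unfolding a_def by simp
    ultimately have "D \<le> 2*t + (1+e)*(2*t)" by (simp add: norm_minus_commute)
    moreover have "(1+e)*(2*t) \<le> (11/10)*(2*t)" using e t0 by (intro mult_right_mono) auto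
    ultimately show ?thesis using t0 by linarith
  qed
  have uu: "u \<bullet> u = D^2" unfolding D_def by (simp add: power2_norm_eq_inner)
  have u0: "u \<noteq> 0" using D0 unfolding D_def by auto
  have Gdiff: "G q - G r = (q - r) \<bullet> u" for q r unfolding G_def by (simp add: inner_diff_left)
  have hpos: "h > 0" using h e phi0 by auto
  have "theta (f ` sphere 0 1) x t \<le> (30*h*t) / t"
  proof (rule theta_le[OF u0])
    show "x \<in> f ` sphere 0 1" unfolding x_def using z0 by simp
    show "0 < t" by (rule t0)
  next
    fix q assume q: "q \<in> f ` sphere 0 1 \<inter> cball x t"
    obtain y where y: "dist z0 y < \<rho>" "q = f y" using cbS q by blast
    obtain y' where y': "y' \<in> sphere 0 1" "q = f y'" using q by blast
    have "f y = f y'" using y(2) y'(2) by simp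
    hence "y = y'" using inj by (simp add: inj_eq)
    hence "norm y = 1" using y' by simp
    hence Gq: "G q \<le> h*D^2" "G q \<ge> -(h*D^2)"
    proof -
      assume n1: "norm y = 1"
      have "2*e*D^2 \<le> h*D^2" using h phi0 by (intro mult_right_mono) auto
      thus "G q \<le> h*D^2" using claimI[OF y(1)] n1 y(2) by auto
      show "G q \<ge> -(h*D^2)" using claimII[OF y(1)] n1 y(2) by auto
    qed
    define s where "s = (q - x) \<bullet> u"
    have s_abs: "\<bar>s\<bar> \<le> 2*h*D^2" unfolding s_def using Gdiff[of q x] Gq Gx by auto
    define p where "p = q - (s / D^2) *\<^sub>R u"
    have pL: "u \<bullet> (p - x) = 0" unfolding p_def s_def using D0 uu
      by (simp add: inner_diff_right inner_commute)
    have "p \<in> (+) x ` {v. u \<bullet> v = 0}" using pL by (intro image_eqI[of _ _ "p - x"]) auto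
    moreover have "(norm (p - x))^2 = (norm (q - x))^2 - s^2 / D^2"
    proof -
      have pxe: "p - x = (q - x) - (s / D^2) *\<^sub>R u" unfolding p_def by simp
      have "(norm (p - x))^2 = (norm (q - x))^2 - 2*(s/D^2)*((q - x) \<bullet> u) + (s/D^2)^2*(u \<bullet> u)"
        unfolding pxe by (rule pyth)
      also have "\<dots> = (norm (q - x))^2 - s^2/D^2" unfolding uu s_def[symmetric] using D0
        by (simp add: field_simps power2_eq_square)
      finally show ?thesis .
    qed
    hence "(norm (p - x))^2 \<le> (norm (q - x))^2" using D0 by (simp add: divide_nonneg_pos)
    hence "norm (p - x) \<le> norm (q - x)" by (rule power2_le_imp_le) simp
    hence "p \<in> cball x t" using q by (simp add: dist_norm norm_minus_commute)
    moreover have "dist q p \<le> 30*h*t"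
    proof -
      have "dist q p = \<bar>s\<bar> / D^2 * D" unfolding p_def dist_norm using D_def D0 by simp
      also have "\<dots> = \<bar>s\<bar> / D" using D0 by (simp add: power2_eq_square)
      also have "\<dots> \<le> 2*h*D" using s_abs D0 by (simp add: field_simps power2_eq_square)
      also have "\<dots> \<le> 2*h*(5*t)" using Dt hpos by (intro mult_left_mono) auto
      also have "\<dots> \<le> 30*h*t" using hpos t0 by simp
      finally show ?thesis .
    qed
    ultimately show "\<exists>p \<in> (+) x ` {v. u \<bullet> v = 0} \<inter> cball x t. dist q p \<le> 30*h*t" by blast
  next
    fix p assume p: "p \<in> (+) x ` {v. u \<bullet> v = 0} \<inter> cball x t"
    then obtain v where v: "p = x + v" "u \<bullet> v = 0" "norm v \<le> t" by (auto simp: dist_norm)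
    define l where "l = 3*h*D"
    have l0: "0 < l" unfolding l_def using hpos D0 by simp
    have lt: "l \<le> t"
    proof -
      have "l \<le> 3*h*(5*t)" unfolding l_def using Dt hpos by (intro mult_left_mono) auto
      also have "\<dots> = (15*h)*t" by simp
      also have "\<dots> \<le> 1*t" using h t0 by (intro mult_right_mono) auto
      finally show ?thesis by simp
    qed
    define nu where "nu = (1/D) *\<^sub>R u"
    have nu1: "norm nu = 1" unfolding nu_def D_def using D0 D_def by simp
    define p' where "p' = x + (1 - l/t) *\<^sub>R v"
    have c01: "0 \<le> 1 - l/t" "1 - l/t \<le> 1" using lt t0 l0 by auto
    have np': "norm (p' - x) \<le> t - l"
    proof -
      have "norm (p' - x) = (1 - l/t) * norm v" unfolding p'_def using c01 by simp
      also have "\<dots> \<le> (1 - l/t) * t" using v c01 by (intro mult_left_mono) auto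
      also have "\<dots> = t - l" using t0 by (simp add: field_simps)
      finally show ?thesis .
    qed
    have pp': "dist p p' \<le> l"
    proof -
      have "p - p' = (l/t) *\<^sub>R v" unfolding p'_def v(1) by (simp add: algebra_simps)
      hence "dist p p' = (l/t) * norm v" using l0 t0 by (simp add: dist_norm)
      also have "\<dots> \<le> (l/t) * t" using v l0 t0 by (intro mult_left_mono) auto
      finally show ?thesis using t0 by simp
    qed
    define Ep where "Ep = p' + l *\<^sub>R nu"
    define Em where "Em = p' - l *\<^sub>R nu"
    have Ein: "Ep \<in> cball x t" "Em \<in> cball x t"
    proof -
      have "Ep - x = (p' - x) + l *\<^sub>R nu" unfolding Ep_def by simp
      hence "norm (Ep - x) \<le> norm (p' - x) + norm (l *\<^sub>R nu)" using norm_triangle_ineq by metis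
      thus "Ep \<in> cball x t" using np' nu1 l0 by (simp add: dist_norm norm_minus_commute)
      have "Em - x = (p' - x) - l *\<^sub>R nu" unfolding Em_def by simp
      hence "norm (Em - x) \<le> norm (p' - x) + norm (l *\<^sub>R nu)" using norm_triangle_ineq4 by metis
      thus "Em \<in> cball x t" using np' nu1 l0 by (simp add: dist_norm norm_minus_commute)
    qed
    have Gp': "G p' = G x" using Gdiff[of p' x] v(2) unfolding p'_def by (simp add: inner_commute)
    have nuu: "nu \<bullet> u = D" unfolding nu_def using uu D0 by (simp add: power2_eq_square)
    have GEp: "G Ep = G x + 3*h*D^2"
      using Gdiff[of Ep p'] Gp' nuu unfolding Ep_def l_def by (simp add: power2_eq_square)
    have GEm: "G Em = G x - 3*h*D^2"
      using Gdiff[of Em p'] Gp' nuu unfolding Em_def l_def by (simp add: power2_eq_square)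
    have hD: "0 < h*D^2" using hpos D0 by simp
    have "2*e*D^2 < 2*h*D^2" using h phi0 e D0 by (intro mult_strict_right_mono) auto
    have Ep_out: "Ep \<notin> f ` cball 0 1"
    proof
      assume "Ep \<in> f ` cball 0 1"
      then obtain y1 where y1: "norm y1 \<le> 1" "Ep = f y1" by auto
      obtain y where y: "dist z0 y < \<rho>" "Ep = f y" using cbS Ein(1) by blast
      have "f y = f y1" using y(2) y1(2) by simp
      hence "y = y1" using inj by (simp add: inj_eq)
      hence "G Ep \<le> 2*e*D^2" using claimI[OF y(1)] y y1 by simp
      thus False using GEp Gx \<open>2*e*D^2 < 2*h*D^2\<close> by linarith
    qed
    have Em_in: "Em \<in> f ` ball 0 1"
    proof -
      obtain y where y: "dist z0 y < \<rho>" "Em = f y" using cbS Ein(2) by blast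
      have "\<not> norm y \<ge> 1"
      proof
        assume "norm y \<ge> 1"
        hence "G Em \<ge> -(h*D^2)" using claimII[OF y(1)] y by simp
        thus False using GEm Gx hD by linarith
      qed
      thus ?thesis using y by auto
    qed
    define K where "K = closed_segment Em Ep"
    have K1: "K \<inter> f ` ball 0 1 \<noteq> {}" using Em_in unfolding K_def by blast
    have K2: "K - f ` cball 0 1 \<noteq> {}" using Ep_out unfolding K_def by blast
    obtain q where q: "q \<in> K" "q \<in> f ` sphere 0 1" using cross[OF hom _ K1 K2] unfolding K_def by blast
    have "K \<subseteq> cball x t" unfolding K_def using Ein by (intro closed_segment_subset) auto
    hence qc: "q \<in> cball x t" using q by blast
    have "K \<subseteq> cball p' l" unfolding K_def
      using nu1 l0 by (intro closed_segment_subset) (auto simp: Ep_def Em_def dist_norm)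
    hence "dist p' q \<le> l" using q by auto
    hence "dist p q \<le> 2*l" using pp' dist_triangle[of p q p'] by linarith
    also have "2*l \<le> 30*h*t"
    proof -
      have "2*l = (6*h)*D" unfolding l_def by simp
      also have "\<dots> \<le> (6*h)*(5*t)" using Dt hpos by (intro mult_left_mono) auto
      finally show ?thesis by simp
    qed
    finally show "\<exists>q \<in> f ` sphere 0 1 \<inter> cball x t. dist p q \<le> 30*h*t" using q qc by blast
  qed
  thus ?thesis using t0 unfolding x_def by simp
qed

theorem corollary2p7:
  fixes f :: "'a::euclidean_space \<Rightarrow> 'a"
  assumes "DIM('a) \<ge> 2"
    and "quasiconformal f"
    and "((\<lambda>r. SUP z \<in> sphere (0::'a) 1. H_tilde f (ball z r)) \<longlongrightarrow> 0) (at_right 0)"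
  shows "reifenberg_flat_vanishing (f ` sphere 0 1)"
proof -
  obtain g where hom: "homeomorphism UNIV UNIV f g" using assms(2) unfolding quasiconformal_def by blast
  have inj: "inj f" by (rule hom_inj[OF hom])
  have cf: "isCont f z" for z
    using hom_cont[OF hom, of UNIV] continuous_on_eq_continuous_at[of UNIV f] by simp
  have cl: "closed (f ` sphere 0 1)"
    by (intro compact_imp_closed compact_continuous_image hom_cont[OF hom]) simp
  have "\<exists>R>0. reifenberg_flat \<delta> R (f ` sphere 0 1)" if d: "\<delta> > 0" for \<delta>
  proof -
    define d1 where "d1 = min \<delta> 1"
    have d1: "0 < d1" "d1 \<le> \<delta>" "d1 \<le> 1" using d unfolding d1_def by auto
    obtain k where k: "(2/3::real)^k < d1/240" using real_arch_pow_inv[of "d1/240" "2/3"] d1 by auto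
    define e where "e = d1/240"
    have e: "0 < e" "e \<le> 1/10" using d1 unfolding e_def by auto
    define \<phi> where "\<phi> = (1+e)*(2/3::real)^k"
    have ph1: "\<phi> \<le> (11/10) * (d1/240)" unfolding \<phi>_def using e k
      by (intro mult_mono) auto
    have ph2: "\<phi> \<le> 1" using ph1 d1 by linarith
    define h where "h = 2*e + 2*\<phi>"
    have h15: "15*h \<le> 1" using ph1 d1 unfolding h_def e_def by (simp add: algebra_simps)
    have h30: "30*h \<le> \<delta>" using ph1 d1 unfolding h_def e_def by (simp add: algebra_simps)
    obtain r0 where r0: "r0 > 0" "\<And>r z. 0 < r \<and> r < r0 \<and> z \<in> sphere 0 1 \<Longrightarrow> Hb f (ball z r) e"
      using hyp_extract[OF assms(3) inj e(1)] by blast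
    define \<rho>1 where "\<rho>1 = min (r0/8) (min (1/2) (2/2^k))"
    have r1: "0 < \<rho>1" "\<rho>1 \<le> r0/8" "\<rho>1 \<le> 1/2" "\<rho>1 \<le> 2/2^k" using r0 unfolding \<rho>1_def by auto
    define F where "F = (\<lambda>z::'a. norm (f ((1+\<rho>1) *\<^sub>R z) - f z))"
    have Fc: "continuous_on (sphere 0 1) F"
      unfolding F_def
      by (intro continuous_at_imp_continuous_on ballI continuous_intros isCont_o2[OF _ cf] cf)
    have s_ne: "sphere (0::'a) 1 \<noteq> {}" by (simp add: sphere_eq_empty)
    obtain z1 where z1: "z1 \<in> sphere 0 1" "\<And>z. z \<in> sphere 0 1 \<Longrightarrow> F z1 \<le> F z"
      using continuous_attains_inf[OF compact_sphere s_ne Fc] by blast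
    have Fpos: "F z > 0" if "z \<in> sphere 0 1" for z
    proof -
      have "(1+\<rho>1) *\<^sub>R z \<noteq> z"
      proof
        assume "(1+\<rho>1) *\<^sub>R z = z"
        hence "\<rho>1 *\<^sub>R z = 0" by (simp add: algebra_simps)
        thus False using that r1 by auto
      qed
      hence "f ((1+\<rho>1) *\<^sub>R z) \<noteq> f z" using inj by (simp add: inj_eq)
      thus ?thesis unfolding F_def by simp
    qed
    define R where "R = F z1 / 2"
    have R0: "R > 0" unfolding R_def using Fpos[OF z1(1)] by simp
    have "reifenberg_flat \<delta> R (f ` sphere 0 1)"
      unfolding reifenberg_flat_def
    proof (intro conjI cl ballI allI impI)
      fix x t assume x: "x \<in> f ` sphere 0 1" and t: "0 < t \<and> t \<le> R"
      then obtain z0 where z0: "z0 \<in> sphere 0 1" "x = f z0" by blast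
      define \<psi> where "\<psi> = (\<lambda>s::real. norm (f ((1+s) *\<^sub>R z0) - f z0))"
      have \<psi>c: "continuous_on {0..\<rho>1} \<psi>"
        unfolding \<psi>_def
        by (intro continuous_at_imp_continuous_on ballI continuous_intros isCont_o2[OF _ cf])
      have "\<psi> 0 \<le> 2*t" using t unfolding \<psi>_def by simp
      moreover have "2*t \<le> \<psi> \<rho>1"
      proof -
        have "2*t \<le> F z1" using t unfolding R_def by simp
        also have "\<dots> \<le> F z0" using z1(2) z0(1) by blast
        finally show ?thesis unfolding F_def \<psi>_def .
      qed
      ultimately obtain \<rho> where rho: "0 \<le> \<rho>" "\<rho> \<le> \<rho>1" "\<psi> \<rho> = 2*t"
        using IVT'[of \<psi> 0 "2*t" \<rho>1] \<psi>c r1 by auto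
      have "\<rho> \<noteq> 0" using rho t unfolding \<psi>_def by auto
      hence rho0: "0 < \<rho>" using rho by simp
      have rk: "\<rho> * 2^k \<le> 2"
      proof -
        have "\<rho> * 2^k \<le> (2/2^k) * 2^k" using rho r1 by (intro mult_right_mono) auto
        thus ?thesis by simp
      qed
      have Hb: "Hb f (ball z0 (4*\<rho>)) e" using r0(2)[of "4*\<rho>" z0] rho0 rho r1 z0 by auto
      have "theta (f ` sphere 0 1) (f z0) t \<le> 30*h"
        by (rule local_flat[OF hom _ rho0 _ rk Hb e _ ph2 h_def h15])
           (use z0 rho r1 \<psi>_def in \<open>auto simp: \<phi>_def\<close>)
      thus "theta (f ` sphere 0 1) x t \<le> \<delta>" using h30 z0 by simp
    qed
    thus ?thesis using R0 by blast
  qed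
  thus ?thesis unfolding reifenberg_flat_vanishing_def using cl by blast
qed

end
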